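(* Let $d\geq 2$, energies $E_1\leq\dots\leq E_d$, inverse temperatures $\alpha>\beta\geq0$, $\gamma_k=e^{-\alpha E_k}/\sum_i e^{-\alpha E_i}$, $\Gamma_k=e^{-\beta E_k}/\sum_i e^{-\beta E_i}$, and assume $\gamma_1>\frac12$ and $\Gamma_1<\Gamma_d+\Gamma_{d-1}$. Let $\mathbf{p}$ be a probability vector with $p_k/\gamma_k\geq p_{k+1}/\gamma_{k+1}$ for all $k$. Then $\mathbf{p}\succ_{\boldsymbol{\Gamma}}\mathbf{q}\succ_{\boldsymbol{\gamma}}\mathbf{r}$, where $$q_1=p_d+\frac{\Gamma_1-\Gamma_d}{\Gamma_{d-1}}p_{d-1},\quad q_k=\frac{\Gamma_k}{1-\Gamma_1}(1-q_1),\qquad r_1=1-\frac{1-\gamma_1}{\gamma_1}q_1,\quad r_k=\frac{\gamma_k}{\gamma_1}q_1,$$ for $k>1$. Moreover, $r_k/\gamma_k\geq r_{k+1}/\gamma_{k+1}$ for all $k$.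
   Context: For a full-support probability vector $\mathbf{g}$, $\mathbf{p}\succ_{\mathbf{g}}\mathbf{q}$ (thermomajorisation) means: ordering indices by a permutation $\pi$ with $p_{\pi_i}/g_{\pi_i}$ non-increasing in $i$, the piecewise linear curve through $\left(\sum_{i\leq j}g_{\pi_i},\sum_{i\leq j}p_{\pi_i}\right)$, $j=0,\dots,d$, is nowhere below the analogous curve of $\mathbf{q}$. *)

theory Defs
  imports Complex_Main "HOL-Combinatorics.Permutations"
begin

text \<open>Vectors on indices 1..d are modelled as functions nat => real; only values at 1..d matter.\<close>

definition prob_vec :: "nat \<Rightarrow> (nat \<Rightarrow> real) \<Rightarrow> bool" where
  "prob_vec d p \<longleftrightarrow> (\<forall>k\<in>{1..d}. 0 \<le> p k) \<and> (\<Sum>k=1..d. p k) = 1"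

definition gibbs :: "nat \<Rightarrow> real \<Rightarrow> (nat \<Rightarrow> real) \<Rightarrow> nat \<Rightarrow> real" where
  "gibbs d b E k = exp (- b * E k) / (\<Sum>i=1..d. exp (- b * E i))"

definition thermo_order :: "nat \<Rightarrow> (nat \<Rightarrow> real) \<Rightarrow> (nat \<Rightarrow> real) \<Rightarrow> (nat \<Rightarrow> nat) \<Rightarrow> bool" where
  "thermo_order d g p \<pi> \<longleftrightarrow> \<pi> permutes {1..d} \<and>
     (\<forall>i j. 1 \<le> i \<and> i \<le> j \<and> j \<le> d \<longrightarrow> p (\<pi> j) / g (\<pi> j) \<le> p (\<pi> i) / g (\<pi> i))"

text \<open>The piecewise linear curve through the points
  (sum_{i<=j} g(pi i), sum_{i<=j} p(pi i)), j = 0..d, evaluated at x in [0, sum g].\<close>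
definition thermo_curve :: "nat \<Rightarrow> (nat \<Rightarrow> real) \<Rightarrow> (nat \<Rightarrow> real) \<Rightarrow> (nat \<Rightarrow> nat) \<Rightarrow> real \<Rightarrow> real" where
  "thermo_curve d g p \<pi> x =
     (\<Sum>j=1..d. p (\<pi> j) / g (\<pi> j) *
        min (g (\<pi> j)) (max 0 (x - (\<Sum>i=1..<j. g (\<pi> i)))))"

definition thermomaj :: "nat \<Rightarrow> (nat \<Rightarrow> real) \<Rightarrow> (nat \<Rightarrow> real) \<Rightarrow> (nat \<Rightarrow> real) \<Rightarrow> bool" where
  "thermomaj d g p q \<longleftrightarrow>
     (\<exists>\<pi> \<sigma>. thermo_order d g p \<pi> \<and> thermo_order d g q \<sigma> \<and>
        (\<forall>x. 0 \<le> x \<and> x \<le> (\<Sum>k=1..d. g k) \<longrightarrow> thermo_curve d g q \<sigma> x \<le> thermo_curve d g p \<pi> x))"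

end

theory Submission
  imports Defs
begin

lemma chain_mono:
  fixes h :: "nat \<Rightarrow> real"
  assumes A: "\<forall>k\<in>{1..<d}. h (k+1) \<le> h k" and "1 \<le> i" "i \<le> j" "j \<le> d"
  shows "h j \<le> h i"
  using assms(3,4)
proof (induction j rule: dec_induct)
  case base then show ?case by simp
next
  case (step n)
  have "h (Suc n) \<le> h n" using A step assms(2) by auto
  then show ?case using step by simp
qed

lemma greedy_prefix:
  fixes gg :: "nat \<Rightarrow> real"
  assumes "0 \<le> x"
  shows "\<forall>j\<in>{1..n}. 0 \<le> gg j \<Longrightarrow> (\<Sum>j=1..n. min (gg j) (max 0 (x - (\<Sum>i=1..<j. gg i)))) = min x (\<Sum>j=1..n. gg j)"
proof (induction n)
  case 0 then show ?case using assms by simp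
next
  case (Suc n)
  have e: "(\<Sum>i=1..<Suc n. gg i) = (\<Sum>j=1..n. gg j)"
    by (simp add: atLeastLessThanSuc_atLeastAtMost)
  have IH: "(\<Sum>j=1..n. min (gg j) (max 0 (x - (\<Sum>i=1..<j. gg i)))) = min x (\<Sum>j=1..n. gg j)"
    using Suc by auto
  have "0 \<le> gg (Suc n)" using Suc.prems by auto
  then show ?case using IH e by (simp add: min_def max_def)
qed

lemma greedy_opt:
  fixes s gg v :: "nat \<Rightarrow> real"
  assumes smono: "\<forall>i j. 1\<le>i \<and> i\<le>j \<and> j\<le>d \<longrightarrow> s j \<le> s i"
    and v: "\<forall>j\<in>{1..d}. 0 \<le> v j \<and> v j \<le> gg j"
    and x: "x = (\<Sum>j=1..d. v j)"
  shows "(\<Sum>j=1..d. s j * v j) \<le> (\<Sum>j=1..d. s j * min (gg j) (max 0 (x - (\<Sum>i=1..<j. gg i))))"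
proof -
  define u where "u j = min (gg j) (max 0 (x - (\<Sum>i=1..<j. gg i)))" for j
  define D where "D n = (\<Sum>j=1..n. u j) - (\<Sum>j=1..n. v j)" for n
  have x0: "0 \<le> x" using x v by (auto intro: sum_nonneg)
  have U: "(\<Sum>j=1..n. u j) = min x (\<Sum>j=1..n. gg j)" if "n \<le> d" for n
  proof -
    have "\<forall>j\<in>{1..n}. 0 \<le> gg j" using v that by force
    then show ?thesis using greedy_prefix[OF x0, of n gg] by (simp add: u_def)
  qed
  have Vle: "(\<Sum>j=1..n. v j) \<le> min x (\<Sum>j=1..n. gg j)" if "n \<le> d" for n
  proof -
    have "(\<Sum>j=1..n. v j) \<le> (\<Sum>j=1..n. gg j)" using v that by (intro sum_mono) auto
    moreover have "(\<Sum>j=1..n. v j) \<le> (\<Sum>j=1..d. v j)" using v that by (intro sum_mono2) auto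
    ultimately show ?thesis using x by simp
  qed
  have Dnn: "0 \<le> D n" if "n \<le> d" for n using U[OF that] Vle[OF that] by (simp add: D_def)
  have key: "n \<le> d \<Longrightarrow> s n * D n \<le> (\<Sum>j=1..n. s j * (u j - v j))" for n
  proof (induction n)
    case 0 then show ?case by (simp add: D_def)
  next
    case (Suc n)
    have IH: "s n * D n \<le> (\<Sum>j=1..n. s j * (u j - v j))" using Suc by simp
    have DS: "D (Suc n) = D n + (u (Suc n) - v (Suc n))" by (simp add: D_def)
    have SS: "(\<Sum>j=1..Suc n. s j * (u j - v j)) = (\<Sum>j=1..n. s j * (u j - v j)) + s (Suc n) * (u (Suc n) - v (Suc n))"
      by simp
    have "(s n - s (Suc n)) * D n \<ge> 0"
    proof (cases "n = 0")
      case True then show ?thesis by (simp add: D_def)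
    next
      case False
      then have "s (Suc n) \<le> s n" using smono Suc.prems by auto
      then show ?thesis using Dnn[of n] Suc.prems by simp
    qed
    then have "s (Suc n) * D n \<le> s n * D n" by (simp add: algebra_simps)
    moreover have "s (Suc n) * D (Suc n) = s (Suc n) * D n + s (Suc n) * (u (Suc n) - v (Suc n))"
      unfolding DS by (simp add: algebra_simps)
    ultimately show ?case using IH SS by linarith
  qed
  have "(\<Sum>j=1..d. v j) \<le> (\<Sum>j=1..d. gg j)" using v by (intro sum_mono) auto
  then have "D d = 0" using U[of d] x by (simp add: D_def)
  then have "0 \<le> (\<Sum>j=1..d. s j * (u j - v j))" using key[of d] by simp
  then have "(\<Sum>j=1..d. s j * v j) \<le> (\<Sum>j=1..d. s j * u j)"
    by (simp add: sum_subtractf right_diff_distrib)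
  then show ?thesis by (simp add: u_def)
qed


lemma curve_lower:
  assumes gpos: "\<forall>k\<in>{1..d}. 0 < g k" and ord: "thermo_order d g p \<pi>"
    and w: "\<forall>k\<in>{1..d}. 0 \<le> w k \<and> w k \<le> 1"
  shows "(\<Sum>k=1..d. w k * p k) \<le> thermo_curve d g p \<pi> (\<Sum>k=1..d. w k * g k)"
proof -
  have perm: "\<pi> permutes {1..d}" using ord by (simp add: thermo_order_def)
  have reidx: "(\<Sum>k=1..d. f k) = (\<Sum>j=1..d. f (\<pi> j))" for f :: "nat \<Rightarrow> real"
    using sum.permute[OF perm, of f] by simp
  have inimg: "\<pi> j \<in> {1..d}" if "j \<in> {1..d}" for j
    using permutes_in_image[OF perm] that by simp
  define x where "x = (\<Sum>k=1..d. w k * g k)"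
  have smono: "\<forall>i j. 1\<le>i \<and> i\<le>j \<and> j\<le>d \<longrightarrow> p (\<pi> j) / g (\<pi> j) \<le> p (\<pi> i) / g (\<pi> i)"
    using ord by (simp add: thermo_order_def)
  have v: "\<forall>j\<in>{1..d}. 0 \<le> w (\<pi> j) * g (\<pi> j) \<and> w (\<pi> j) * g (\<pi> j) \<le> g (\<pi> j)"
  proof
    fix j assume j: "j \<in> {1..d}"
    then have "0 < g (\<pi> j)" "0 \<le> w (\<pi> j)" "w (\<pi> j) \<le> 1" using gpos w inimg[OF j] by auto
    then show "0 \<le> w (\<pi> j) * g (\<pi> j) \<and> w (\<pi> j) * g (\<pi> j) \<le> g (\<pi> j)"
      by (simp add: mult_le_cancel_right1)
  qed
  have xx: "x = (\<Sum>j=1..d. w (\<pi> j) * g (\<pi> j))" unfolding x_def by (rule reidx)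
  have G: "(\<Sum>j=1..d. p (\<pi> j) / g (\<pi> j) * (w (\<pi> j) * g (\<pi> j))) \<le>
     (\<Sum>j=1..d. p (\<pi> j) / g (\<pi> j) * min (g (\<pi> j)) (max 0 (x - (\<Sum>i=1..<j. g (\<pi> i)))))"
    by (rule greedy_opt[OF smono v xx])
  have "(\<Sum>k=1..d. w k * p k) = (\<Sum>j=1..d. w (\<pi> j) * p (\<pi> j))" by (rule reidx)
  also have "\<dots> = (\<Sum>j=1..d. p (\<pi> j) / g (\<pi> j) * (w (\<pi> j) * g (\<pi> j)))"
  proof (rule sum.cong[OF refl])
    fix j assume j: "j \<in> {1..d}"
    then have "0 < g (\<pi> j)" using gpos inimg[OF j] by auto
    then show "w (\<pi> j) * p (\<pi> j) = p (\<pi> j) / g (\<pi> j) * (w (\<pi> j) * g (\<pi> j))" by simp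
  qed
  finally show ?thesis using G unfolding x_def thermo_curve_def by simp
qed

lemma curve_attain:
  assumes gpos: "\<forall>k\<in>{1..d}. 0 < g k" and perm: "\<pi> permutes {1..d}"
    and x: "0 \<le> x" "x \<le> (\<Sum>k=1..d. g k)"
  shows "\<exists>w. (\<forall>k\<in>{1..d}. 0 \<le> w k \<and> w k \<le> 1) \<and> (\<Sum>k=1..d. w k * g k) = x
     \<and> thermo_curve d g p \<pi> x = (\<Sum>k=1..d. w k * p k)"
proof -
  have reidx: "(\<Sum>k=1..d. f k) = (\<Sum>j=1..d. f (\<pi> j))" for f :: "nat \<Rightarrow> real"
    using sum.permute[OF perm, of f] by simp
  have inimg: "\<pi> j \<in> {1..d}" if "j \<in> {1..d}" for j
    using permutes_in_image[OF perm] that by simp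
  define u where "u j = min (g (\<pi> j)) (max 0 (x - (\<Sum>i=1..<j. g (\<pi> i))))" for j
  define w where "w k = u (inv \<pi> k) / g k" for k
  have wj: "w (\<pi> j) = u j / g (\<pi> j)" for j using permutes_inverses(2)[OF perm] by (simp add: w_def)
  have U: "(\<Sum>j=1..d. u j) = min x (\<Sum>j=1..d. g (\<pi> j))"
  proof -
    have "\<forall>j\<in>{1..d}. 0 \<le> g (\<pi> j)" using gpos inimg by (auto simp: less_imp_le)
    then show ?thesis using greedy_prefix[OF x(1), of d "\<lambda>j. g (\<pi> j)"] by (simp add: u_def)
  qed
  have w01: "\<forall>k\<in>{1..d}. 0 \<le> w k \<and> w k \<le> 1"
  proof
    fix k assume k: "k \<in> {1..d}"
    then obtain j where j: "j \<in> {1..d}" "k = \<pi> j"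
      using permutes_inverses(1)[OF perm, of k] permutes_in_image[OF permutes_inv[OF perm], of k] by metis
    have gp: "0 < g (\<pi> j)" using gpos inimg[OF j(1)] by auto
    have "0 \<le> u j" "u j \<le> g (\<pi> j)" using gp by (auto simp: u_def)
    then show "0 \<le> w k \<and> w k \<le> 1" using gp j(2) wj[of j] by simp
  qed
  have "(\<Sum>k=1..d. w k * g k) = (\<Sum>j=1..d. w (\<pi> j) * g (\<pi> j))" by (rule reidx)
  also have "\<dots> = (\<Sum>j=1..d. u j)"
  proof (rule sum.cong[OF refl])
    fix j assume j: "j \<in> {1..d}"
    then have "0 < g (\<pi> j)" using gpos inimg[OF j] by auto
    then show "w (\<pi> j) * g (\<pi> j) = u j" by (simp add: wj)
  qed
  also have "\<dots> = x" using U x(2) reidx[of g] by simp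
  finally have W: "(\<Sum>k=1..d. w k * g k) = x" .
  have "(\<Sum>k=1..d. w k * p k) = (\<Sum>j=1..d. w (\<pi> j) * p (\<pi> j))" by (rule reidx)
  also have "\<dots> = thermo_curve d g p \<pi> x"
    unfolding thermo_curve_def using gpos inimg by (intro sum.cong) (auto simp: wj u_def)
  finally show ?thesis using w01 W by auto
qed

lemma exists_order:
  fixes f :: "nat \<Rightarrow> real"
  shows "\<exists>\<pi>. \<pi> permutes {1..d} \<and> (\<forall>i j. 1 \<le> i \<and> i \<le> j \<and> j \<le> d \<longrightarrow> f (\<pi> j) \<le> f (\<pi> i))"
proof -
  define xs where "xs = sort_key (\<lambda>k. - f k) [1..<d+1]"
  have len: "length xs = d" and dist: "distinct xs" and st: "set xs = {1..d}"
    by (auto simp: xs_def)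
  have srt: "sorted (map (\<lambda>k. - f k) xs)" by (simp add: xs_def)
  define \<pi> where "\<pi> j = (if j \<in> {1..d} then xs ! (j - 1) else j)" for j
  have img: "\<pi> ` {1..d} = {1..d}"
  proof -
    have "\<pi> ` {1..d} = (\<lambda>i. xs ! i) ` {..<d}"
    proof (rule set_eqI, rule iffI)
      fix y assume "y \<in> \<pi> ` {1..d}"
      then obtain j where "j \<in> {1..d}" "y = xs ! (j-1)" by (auto simp: \<pi>_def)
      then show "y \<in> (\<lambda>i. xs ! i) ` {..<d}" by (intro image_eqI[of _ _ "j-1"]) auto
    next
      fix y assume "y \<in> (\<lambda>i. xs ! i) ` {..<d}"
      then obtain i where "i < d" "y = xs ! i" by auto
      then show "y \<in> \<pi> ` {1..d}" by (intro image_eqI[of _ _ "i+1"]) (auto simp: \<pi>_def)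
    qed
    also have "\<dots> = set xs" using len by (auto simp: set_conv_nth)
    finally show ?thesis using st by simp
  qed
  have inj: "inj_on \<pi> {1..d}"
  proof (rule inj_onI)
    fix a b assume "a \<in> {1..d}" "b \<in> {1..d}" "\<pi> a = \<pi> b"
    then have "xs ! (a-1) = xs ! (b-1)" "a - 1 < d" "b - 1 < d" by (auto simp: \<pi>_def)
    then have "a - 1 = b - 1" using dist len nth_eq_iff_index_eq by metis
    then show "a = b" using \<open>a \<in> {1..d}\<close> \<open>b \<in> {1..d}\<close> by auto
  qed
  have perm: "\<pi> permutes {1..d}"
  proof (rule bij_imp_permutes)
    show "bij_betw \<pi> {1..d} {1..d}" using img inj by (simp add: bij_betw_def)
  qed (auto simp: \<pi>_def)
  have "f (\<pi> j) \<le> f (\<pi> i)" if "1 \<le> i" "i \<le> j" "j \<le> d" for i j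
  proof -
    have "(map (\<lambda>k. - f k) xs) ! (i-1) \<le> (map (\<lambda>k. - f k) xs) ! (j-1)"
      using sorted_nth_mono[OF srt, of "i-1" "j-1"] that len by simp
    then show ?thesis using that len by (simp add: \<pi>_def)
  qed
  then show ?thesis using perm by blast
qed

lemma exists_thermo_order: "\<exists>\<pi>. thermo_order d g p \<pi>"
  using exists_order[of d "\<lambda>k. p k / g k"] by (simp add: thermo_order_def)


lemma curve_comb:
  assumes gpos: "\<forall>k\<in>{1..d}. 0 < g k" and ord: "thermo_order d g p \<pi>"
    and w1: "\<forall>k\<in>{1..d}. 0 \<le> w1 k \<and> w1 k \<le> 1"
    and w2: "\<forall>k\<in>{1..d}. 0 \<le> w2 k \<and> w2 k \<le> 1"
    and l: "0 \<le> l" "l \<le> 1"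
    and M1: "(\<Sum>k=1..d. w1 k * p k) = M1" and M2: "(\<Sum>k=1..d. w2 k * p k) = M2"
    and X1: "(\<Sum>k=1..d. w1 k * g k) = X1" and X2: "(\<Sum>k=1..d. w2 k * g k) = X2"
  shows "l * M1 + (1 - l) * M2 \<le> thermo_curve d g p \<pi> (l * X1 + (1 - l) * X2)"
proof -
  define w where "w k = l * w1 k + (1 - l) * w2 k" for k
  have w01: "\<forall>k\<in>{1..d}. 0 \<le> w k \<and> w k \<le> 1"
  proof
    fix k assume k: "k \<in> {1..d}"
    have a: "0 \<le> w1 k" "w1 k \<le> 1" "0 \<le> w2 k" "w2 k \<le> 1" using w1 w2 k by auto
    have "l * w1 k \<le> l" using a l mult_left_le by blast
    moreover have "(1 - l) * w2 k \<le> 1 - l" using a l mult_left_le by (metis diff_ge_0_iff_ge)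
    moreover have "0 \<le> l * w1 k" "0 \<le> (1 - l) * w2 k" using a l by auto
    ultimately show "0 \<le> w k \<and> w k \<le> 1" by (simp add: w_def)
  qed
  have sp: "(\<Sum>k=1..d. w k * f k) = l * (\<Sum>k=1..d. w1 k * f k) + (1 - l) * (\<Sum>k=1..d. w2 k * f k)"
    for f :: "nat \<Rightarrow> real"
  proof -
    have "(\<Sum>k=1..d. w k * f k) = (\<Sum>k=1..d. l * (w1 k * f k) + (1 - l) * (w2 k * f k))"
      by (rule sum.cong) (auto simp: w_def algebra_simps)
    also have "\<dots> = l * (\<Sum>k=1..d. w1 k * f k) + (1 - l) * (\<Sum>k=1..d. w2 k * f k)"
      by (simp add: sum.distrib sum_distrib_left)
    finally show ?thesis .
  qed
  show ?thesis using curve_lower[OF gpos ord w01] sp[of p] sp[of g] M1 M2 X1 X2 by simp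
qed

lemma sum_delta1:
  fixes f :: "nat \<Rightarrow> real"
  assumes "a \<in> A" "finite A"
  shows "(\<Sum>k\<in>A. (if k = a then c else 0) * f k) = c * f a"
proof -
  have "(\<Sum>k\<in>A. (if k = a then c else 0) * f k) = (\<Sum>k\<in>A. if k = a then c * f a else 0)"
    by (rule sum.cong) auto
  then show ?thesis using assms by simp
qed

lemma sumW:
  fixes f :: "nat \<Rightarrow> real"
  assumes "a \<in> A" "b \<in> A" "finite A"
  shows "(\<Sum>k\<in>A. (1 - (if k = a then c else 0) - (if k = b then e else 0)) * f k) = sum f A - c * f a - e * f b"
proof -
  have "(\<Sum>k\<in>A. (1 - (if k = a then c else 0) - (if k = b then e else 0)) * f k)
     = (\<Sum>k\<in>A. f k) - (\<Sum>k\<in>A. (if k = a then c else 0) * f k) - (\<Sum>k\<in>A. (if k = b then e else 0) * f k)"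
  proof -
    have "(\<Sum>k\<in>A. (1 - (if k = a then c else 0) - (if k = b then e else 0)) * f k)
       = (\<Sum>k\<in>A. f k - (if k = a then c else 0) * f k - (if k = b then e else 0) * f k)"
      by (rule sum.cong) (auto simp: algebra_simps)
    then show ?thesis by (simp only: sum_subtractf)
  qed
  then show ?thesis using sum_delta1[OF assms(1,3)] sum_delta1[OF assms(2,3)] by simp
qed

lemma gibbs_Z: "1 \<le> (d::nat) \<Longrightarrow> 0 < (\<Sum>i=1..d. exp (- (b::real) * E i))"
  by (rule sum_pos) auto

lemma gibbs_pos: "1 \<le> d \<Longrightarrow> 0 < gibbs d b E k"
  unfolding gibbs_def using gibbs_Z[of d b E] by (intro divide_pos_pos) auto

lemma gibbs_sum: "1 \<le> d \<Longrightarrow> (\<Sum>k=1..d. gibbs d b E k) = 1"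
  unfolding gibbs_def using gibbs_Z[of d b E] by (simp add: sum_divide_distrib[symmetric])

lemma gibbs_anti:
  assumes "1 \<le> d" "0 \<le> b" "E k \<le> E l"
  shows "gibbs d b E l \<le> gibbs d b E k"
proof -
  have "exp (- b * E l) \<le> exp (- b * E k)" using assms by (simp add: mult_left_mono)
  then show ?thesis unfolding gibbs_def using gibbs_Z[OF assms(1), of b E]
    by (simp add: divide_right_mono)
qed

lemma gibbs_ratio:
  assumes "1 \<le> d" "b \<le> a" "E k \<le> E l"
  shows "gibbs d a E l * gibbs d b E k \<le> gibbs d a E k * gibbs d b E l"
proof -
  define Za where "Za = (\<Sum>i=1..d. exp (- a * E i))"
  define Zb where "Zb = (\<Sum>i=1..d. exp (- b * E i))"
  have Z: "0 < Za" "0 < Zb" using gibbs_Z[OF assms(1)] by (auto simp: Za_def Zb_def)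
  have "0 \<le> (a - b) * (E l - E k)" using assms by simp
  then have "- a * E l + - b * E k \<le> - a * E k + - b * E l" by (simp add: algebra_simps)
  then have "exp (- a * E l) * exp (- b * E k) \<le> exp (- a * E k) * exp (- b * E l)"
    by (simp add: exp_add[symmetric])
  then have "exp (- a * E l) * exp (- b * E k) / (Za * Zb) \<le> exp (- a * E k) * exp (- b * E l) / (Za * Zb)"
    using Z by (simp add: divide_right_mono)
  then show ?thesis unfolding gibbs_def Za_def[symmetric] Zb_def[symmetric] by simp
qed


theorem lemma17:
  fixes d :: nat and E p :: "nat \<Rightarrow> real" and \<alpha> \<beta> :: real
  assumes "d \<ge> 2"
    and "\<forall>k\<in>{1..<d}. E k \<le> E (k+1)"
    and "\<alpha> > \<beta>" and "\<beta> \<ge> 0"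
    and "gibbs d \<alpha> E 1 > 1/2"
    and "gibbs d \<beta> E 1 < gibbs d \<beta> E d + gibbs d \<beta> E (d-1)"
    and "prob_vec d p"
    and "\<forall>k\<in>{1..<d}. p k / gibbs d \<alpha> E k \<ge> p (k+1) / gibbs d \<alpha> E (k+1)"
  shows "let \<gamma> = gibbs d \<alpha> E; \<Gamma> = gibbs d \<beta> E;
             q1 = p d + (\<Gamma> 1 - \<Gamma> d) / \<Gamma> (d-1) * p (d-1);
             q = (\<lambda>k. if k = 1 then q1 else \<Gamma> k / (1 - \<Gamma> 1) * (1 - q1));
             r = (\<lambda>k. if k = 1 then 1 - (1 - \<gamma> 1) / \<gamma> 1 * q1 else \<gamma> k / \<gamma> 1 * q1)
         in thermomaj d \<Gamma> p q \<and> thermomaj d \<gamma> q r \<and>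
            (\<forall>k\<in>{1..<d}. r k / \<gamma> k \<ge> r (k+1) / \<gamma> (k+1))"
proof -
  define \<gamma> where "\<gamma> = gibbs d \<alpha> E"
  define \<Gamma> where "\<Gamma> = gibbs d \<beta> E"
  define \<theta> where "\<theta> = (\<Gamma> 1 - \<Gamma> d) / \<Gamma> (d-1)"
  define q1 where "q1 = p d + (\<Gamma> 1 - \<Gamma> d) / \<Gamma> (d-1) * p (d-1)"
  define c where "c = (1 - q1) / (1 - \<Gamma> 1)"
  define q where "q = (\<lambda>k. if k = 1 then q1 else \<Gamma> k / (1 - \<Gamma> 1) * (1 - q1))"
  define r where "r = (\<lambda>k. if k = 1 then 1 - (1 - \<gamma> 1) / \<gamma> 1 * q1 else \<gamma> k / \<gamma> 1 * q1)"
  have d1: "1 \<le> d" using assms(1) by simp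
  have gpos: "\<And>k. 0 < \<gamma> k" unfolding \<gamma>_def using gibbs_pos[OF d1] by blast
  have Gpos: "\<And>k. 0 < \<Gamma> k" unfolding \<Gamma>_def using gibbs_pos[OF d1] by blast
  have gsum: "(\<Sum>k=1..d. \<gamma> k) = 1" unfolding \<gamma>_def using gibbs_sum[OF d1] by blast
  have Gsum: "(\<Sum>k=1..d. \<Gamma> k) = 1" unfolding \<Gamma>_def using gibbs_sum[OF d1] by blast
  have Emono: "E k \<le> E l" if "1 \<le> k" "k \<le> l" "l \<le> d" for k l
    using chain_mono[of d "\<lambda>k. - E k" k l] assms(2) that by force
  have ratio: "\<gamma> l * \<Gamma> k \<le> \<gamma> k * \<Gamma> l" if "1 \<le> k" "k \<le> l" "l \<le> d" for k l
    unfolding \<gamma>_def \<Gamma>_def using gibbs_ratio[OF d1 _ Emono[OF that]] assms(3) by simp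
  have Ganti: "\<Gamma> l \<le> \<Gamma> k" if "1 \<le> k" "k \<le> l" "l \<le> d" for k l
    unfolding \<Gamma>_def using gibbs_anti[OF d1 assms(4) Emono[OF that]] by simp
  have pnn: "\<And>k. k \<in> {1..d} \<Longrightarrow> 0 \<le> p k" and psum: "(\<Sum>k=1..d. p k) = 1"
    using assms(7) by (auto simp: prob_vec_def)
  have pg: "p j / \<gamma> j \<le> p i / \<gamma> i" if "1 \<le> i" "i \<le> j" "j \<le> d" for i j
    using chain_mono[of d "\<lambda>k. p k / \<gamma> k" i j] assms(8) that by (simp add: \<gamma>_def)
  have pG: "p j / \<Gamma> j \<le> p i / \<Gamma> i" if ij: "1 \<le> i" "i \<le> j" "j \<le> d" for i j
  proof -
    have Gi: "0 < \<Gamma> i" "0 < \<Gamma> j" "0 < \<gamma> i" "0 < \<gamma> j" using Gpos gpos by auto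
    have r1: "\<gamma> j / \<Gamma> j \<le> \<gamma> i / \<Gamma> i" using ratio[OF ij] Gi by (simp add: field_simps)
    have "0 \<le> p i / \<gamma> i" using pnn[of i] ij Gi by simp
    moreover have "0 \<le> \<gamma> j / \<Gamma> j" using Gi by simp
    ultimately have "(p j / \<gamma> j) * (\<gamma> j / \<Gamma> j) \<le> (p i / \<gamma> i) * (\<gamma> i / \<Gamma> i)"
      using mult_mono[OF pg[OF ij] r1] by simp
    then show ?thesis using Gi by simp
  qed
  have in1: "1 \<in> {1..d}" and ind: "d \<in> {1..d}" and indm: "d - 1 \<in> {1..d}" using assms(1) by auto
  have dne: "d - 1 \<noteq> d" "1 \<noteq> d" using assms(1) by auto
  have split: "(\<Sum>k=1..d. f k) = f 1 + (\<Sum>k=2..d. f k)" for f :: "nat \<Rightarrow> real"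
    using sum.atLeast_Suc_atMost[OF d1, of f] by (simp add: numeral_2_eq_2)
  have G1d: "\<Gamma> d \<le> \<Gamma> 1" using Ganti[of 1 d] d1 by simp
  have th0: "0 \<le> \<theta>" using G1d Gpos[of "d-1"] by (simp add: \<theta>_def)
  have th1: "\<theta> < 1" using assms(6) Gpos[of "d-1"] by (simp add: \<theta>_def \<Gamma>_def field_simps)
  have thG: "\<theta> * \<Gamma> (d-1) = \<Gamma> 1 - \<Gamma> d" using Gpos[of "d-1"] by (simp add: \<theta>_def)
  have q1th: "q1 = p d + \<theta> * p (d-1)" by (simp add: q1_def \<theta>_def)
  have Gsum2: "(\<Sum>k=2..d. \<Gamma> k) = 1 - \<Gamma> 1" using Gsum split[of \<Gamma>] by simp
  have gsum2: "(\<Sum>k=2..d. \<gamma> k) = 1 - \<gamma> 1" using gsum split[of \<gamma>] by simp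
  have G1lt: "\<Gamma> 1 < 1"
  proof -
    have "(\<Sum>k=2..d. \<Gamma> k) > 0" using assms(1) Gpos by (intro sum_pos) auto
    then show ?thesis using Gsum2 by simp
  qed
  have g1lt: "\<gamma> 1 < 1"
  proof -
    have "(\<Sum>k=2..d. \<gamma> k) > 0" using assms(1) gpos by (intro sum_pos) auto
    then show ?thesis using gsum2 by simp
  qed
  have g1half: "\<gamma> 1 > 1/2" using assms(5) by (simp add: \<gamma>_def)
  have p1le: "p 1 \<le> 1"
  proof -
    have "(\<Sum>k=2..d. p k) \<ge> 0" using pnn by (intro sum_nonneg) auto
    then show ?thesis using psum split[of p] by simp
  qed
  have q1le_p1: "q1 \<le> p 1"
  proof -
    have a: "p d \<le> p 1 * \<Gamma> d / \<Gamma> 1" using pG[of 1 d] d1 Gpos[of d] Gpos[of 1] by (simp add: field_simps)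
    have b: "p (d-1) \<le> p 1 * \<Gamma> (d-1) / \<Gamma> 1" using pG[of 1 "d-1"] assms(1) Gpos[of "d-1"] Gpos[of 1]
      by (simp add: field_simps)
    have "\<theta> * p (d-1) \<le> \<theta> * (p 1 * \<Gamma> (d-1) / \<Gamma> 1)" using b th0 by (rule mult_left_mono)
    also have "\<dots> = p 1 * (\<theta> * \<Gamma> (d-1)) / \<Gamma> 1" by simp
    also have "\<dots> = p 1 * (\<Gamma> 1 - \<Gamma> d) / \<Gamma> 1" using thG by simp
    finally have "q1 \<le> p 1 * \<Gamma> d / \<Gamma> 1 + p 1 * (\<Gamma> 1 - \<Gamma> d) / \<Gamma> 1" using a q1th by simp
    also have "\<dots> = p 1" using Gpos[of 1] by (simp add: field_simps)
    finally show ?thesis .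
  qed
  have q1nn: "0 \<le> q1" using q1th th0 pnn[OF ind] pnn[OF indm] by simp
  have q1le1: "q1 \<le> 1" using q1le_p1 p1le by simp
  have q1g1: "q1 \<le> \<gamma> 1"
  proof (cases "d = 2")
    case True
    have s2: "(\<Sum>k=1..d. f k) = f 1 + f 2" for f :: "nat \<Rightarrow> real"
      using True by (simp add: numeral_2_eq_2)
    have pp: "p 1 + p 2 = 1" using psum s2[of p] by simp
    have gg: "\<gamma> 1 + \<gamma> 2 = 1" using gsum s2[of \<gamma>] by simp
    have GG: "\<Gamma> 1 + \<Gamma> 2 = 1" using Gsum s2[of \<Gamma>] by simp
    have "p 2 / \<gamma> 2 \<le> p 1 / \<gamma> 1" using pg[of 1 2] True by simp
    then have "p 2 * \<gamma> 1 \<le> p 1 * \<gamma> 2" using gpos[of 1] gpos[of 2] by (simp add: field_simps)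
    moreover have "p 1 * \<gamma> 2 = (1 - p 2) * \<gamma> 2" using pp by (simp add: eq_diff_eq)
    ultimately have "p 2 * \<gamma> 1 \<le> (1 - p 2) * \<gamma> 2" by linarith
    then have "p 2 * (\<gamma> 1 + \<gamma> 2) \<le> \<gamma> 2" by (simp add: algebra_simps)
    then have p2: "p 2 \<le> \<gamma> 2" using gg by simp
    have rt: "\<gamma> 2 * \<Gamma> 1 \<le> \<gamma> 1 * \<Gamma> 2" using ratio[of 1 2] True by simp
    have thd: "1 - \<theta> = \<Gamma> 2 / \<Gamma> 1" using True Gpos[of 1] by (simp add: \<theta>_def field_simps)
    have q1e: "q1 = \<theta> + (1 - \<theta>) * p 2"
    proof -
      have "q1 = p 2 + \<theta> * p 1" using q1th True by simp
      also have "\<dots> = p 2 + \<theta> * (1 - p 2)" using pp by (simp add: eq_diff_eq)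
      finally show ?thesis by (simp add: algebra_simps)
    qed
    have "(1 - \<theta>) * p 2 \<le> (1 - \<theta>) * \<gamma> 2" using p2 th1 by (intro mult_left_mono) auto
    moreover have "\<theta> + (1 - \<theta>) * \<gamma> 2 \<le> \<gamma> 1"
    proof -
      have e1: "\<theta> = 1 - \<Gamma> 2 / \<Gamma> 1" using thd by simp
      have e2: "\<gamma> 2 = 1 - \<gamma> 1" using gg by simp
      have "\<theta> + (1 - \<theta>) * \<gamma> 2 = 1 - (\<Gamma> 2 / \<Gamma> 1) * \<gamma> 1"
        by (simp only: e1 e2) (simp add: algebra_simps add_divide_distrib[symmetric])
      moreover have "\<gamma> 2 \<le> (\<Gamma> 2 / \<Gamma> 1) * \<gamma> 1" using rt Gpos[of 1] by (simp add: field_simps)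
      ultimately show ?thesis using gg by simp
    qed
    ultimately show ?thesis using q1e by simp
  next
    case False
    then have d3: "3 \<le> d" using assms(1) by simp
    have three: "f 1 + f (d-1) + f d \<le> (\<Sum>k=1..d. f k)" if fnn: "\<And>k. k \<in> {1..d} \<Longrightarrow> 0 \<le> f k"
      for f :: "nat \<Rightarrow> real"
    proof -
      have "(\<Sum>k\<in>{1, d-1, d}. f k) \<le> (\<Sum>k=1..d. f k)"
        using d3 fnn by (intro sum_mono2) auto
      moreover have "(\<Sum>k\<in>{1, d-1, d}. f k) = f 1 + f (d-1) + f d" using d3 by simp
      ultimately show ?thesis by simp
    qed
    have g3: "\<gamma> 1 + \<gamma> (d-1) + \<gamma> d \<le> 1" using three[of \<gamma>] gpos gsum by (simp add: less_imp_le)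
    have p3: "p 1 + p (d-1) + p d \<le> 1" using three[of p] pnn psum by simp
    have "\<theta> * p (d-1) \<le> p (d-1)" using th1 pnn[OF indm] by (simp add: mult_left_le_one_le less_imp_le th0)
    then have q1s: "q1 \<le> p d + p (d-1)" using q1th by simp
    show ?thesis
    proof (cases "p (d-1) / \<gamma> (d-1) \<le> 1")
      case True
      have a: "p (d-1) \<le> \<gamma> (d-1)" using True gpos[of "d-1"] by (simp add: field_simps)
      have "p d / \<gamma> d \<le> p (d-1) / \<gamma> (d-1)" using pg[of "d-1" d] d3 by simp
      then have "p d / \<gamma> d \<le> 1" using True by simp
      then have b: "p d \<le> \<gamma> d" using gpos[of d] by (simp add: field_simps)
      show ?thesis using a b q1s g3 g1half by simp
    next
      case False
      have "p (d-1) / \<gamma> (d-1) \<le> p 1 / \<gamma> 1" using pg[of 1 "d-1"] d3 by simp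
      then have "1 < p 1 / \<gamma> 1" using False by simp
      then have "\<gamma> 1 < p 1" using gpos[of 1] by (simp add: field_simps)
      then show ?thesis using q1s p3 g1half by simp
    qed
  qed
  have qk: "q k = c * \<Gamma> k" if "k \<noteq> 1" for k using that by (simp add: q_def c_def)
  have qsum: "(\<Sum>k=1..d. q k) = 1"
  proof -
    have "(\<Sum>k=2..d. q k) = (\<Sum>k=2..d. c * \<Gamma> k)" by (rule sum.cong) (auto simp: qk)
    also have "\<dots> = c * (1 - \<Gamma> 1)" by (simp add: sum_distrib_left[symmetric] Gsum2)
    also have "\<dots> = 1 - q1" using G1lt by (simp add: c_def)
    finally show ?thesis using split[of q] by (simp add: q_def)
  qed
  have r1q1: "q1 \<le> r 1"
  proof -
    have "q1 * (1 - \<gamma> 1) \<le> \<gamma> 1 * (1 - q1)" using q1g1 q1le1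
      by (simp add: algebra_simps)
    then have "(1 - \<gamma> 1) / \<gamma> 1 * q1 \<le> 1 - q1" using gpos[of 1] by (simp add: field_simps)
    then show ?thesis by (simp add: r_def)
  qed
  have rk: "r k / \<gamma> k = q1 / \<gamma> 1" if "k \<noteq> 1" for k
    using that gpos[of k] by (simp add: r_def)
  have r1g: "q1 / \<gamma> 1 \<le> r 1 / \<gamma> 1" using r1q1 gpos[of 1] by (simp add: divide_right_mono)
  have partC: "\<forall>k\<in>{1..<d}. r k / \<gamma> k \<ge> r (k+1) / \<gamma> (k+1)"
  proof
    fix k assume kin: "k \<in> {1..<d}"
    show "r k / \<gamma> k \<ge> r (k+1) / \<gamma> (k+1)"
    proof (cases "k = 1")
      case True then show ?thesis using rk[of "Suc 1"] r1g by simp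
    next
      case False then show ?thesis using rk[of k] rk[of "k+1"] kin by simp
    qed
  qed
  have GposI: "\<forall>k\<in>{1..d}. 0 < \<Gamma> k" and gposI: "\<forall>k\<in>{1..d}. 0 < \<gamma> k" using Gpos gpos by auto
  define e1 :: "nat \<Rightarrow> real" where "e1 = (\<lambda>k. if k = 1 then 1 else 0)"
  define one :: "nat \<Rightarrow> real" where "one = (\<lambda>k. 1)"
  define zero :: "nat \<Rightarrow> real" where "zero = (\<lambda>k. 0)"
  have e1v: "\<forall>k\<in>{1..d}. 0 \<le> e1 k \<and> e1 k \<le> 1" by (simp add: e1_def)
  have onev: "\<forall>k\<in>{1..d}. 0 \<le> one k \<and> one k \<le> 1" by (simp add: one_def)
  have zerov: "\<forall>k\<in>{1..d}. 0 \<le> zero k \<and> zero k \<le> 1" by (simp add: zero_def)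
  have e1s: "(\<Sum>k=1..d. e1 k * f k) = f 1" for f :: "nat \<Rightarrow> real"
    using sum_delta1[OF in1 finite_atLeastAtMost, where c=1 and f=f] by (simp add: e1_def)
  have ones: "(\<Sum>k=1..d. one k * f k) = (\<Sum>k=1..d. f k)" for f :: "nat \<Rightarrow> real"
    by (simp add: one_def)
  have zeros: "(\<Sum>k=1..d. zero k * f k) = 0" for f :: "nat \<Rightarrow> real"
    by (simp add: zero_def)
  have ordp: "thermo_order d \<Gamma> p id"
    unfolding thermo_order_def using pG by (auto simp: permutes_id)
  have partA: "thermomaj d \<Gamma> p q"
  proof -
    obtain \<sigma> where ordq: "thermo_order d \<Gamma> q \<sigma>" using exists_thermo_order by blast
    have sig: "\<sigma> permutes {1..d}" using ordq thermo_order_def by blast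
    define W where "W = (\<lambda>k. 1 - (if k = d-1 then \<theta> else 0) - (if k = d then 1 else 0))"
    have Wv: "\<forall>k\<in>{1..d}. 0 \<le> W k \<and> W k \<le> 1"
      using th0 th1 dne by (auto simp: W_def)
    have Ws: "(\<Sum>k=1..d. W k * f k) = (\<Sum>k=1..d. f k) - \<theta> * f (d-1) - f d" for f :: "nat \<Rightarrow> real"
      unfolding W_def using sumW[OF indm ind finite_atLeastAtMost, where c="\<theta>" and e=1 and f=f] by simp
    have Wp: "(\<Sum>k=1..d. W k * p k) = 1 - q1" using Ws[of p] psum q1th by simp
    have WG: "(\<Sum>k=1..d. W k * \<Gamma> k) = 1 - \<Gamma> 1" using Ws[of \<Gamma>] Gsum thG by simp
    have main: "thermo_curve d \<Gamma> q \<sigma> x \<le> thermo_curve d \<Gamma> p id x"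
      if x: "0 \<le> x" "x \<le> (\<Sum>k=1..d. \<Gamma> k)" for x
    proof -
      obtain w where w01: "\<forall>k\<in>{1..d}. 0 \<le> w k \<and> w k \<le> 1" and wx: "(\<Sum>k=1..d. w k * \<Gamma> k) = x"
        and wc: "thermo_curve d \<Gamma> q \<sigma> x = (\<Sum>k=1..d. w k * q k)"
        using curve_attain[OF GposI sig x] by blast
      define S where "S = (\<Sum>k=2..d. w k * \<Gamma> k)"
      have xS: "x = w 1 * \<Gamma> 1 + S" using wx split[of "\<lambda>k. w k * \<Gamma> k"] by (simp add: S_def)
      have S0: "0 \<le> S" unfolding S_def using w01 Gpos by (intro sum_nonneg) (auto simp: less_imp_le)
      have S1: "S \<le> 1 - \<Gamma> 1"
      proof -
        have "S \<le> (\<Sum>k=2..d. \<Gamma> k)" unfolding S_def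
        proof (rule sum_mono)
          fix k assume "k \<in> {2..d}"
          then have "w k \<le> 1" "0 < \<Gamma> k" using w01 Gpos by auto
          then show "w k * \<Gamma> k \<le> \<Gamma> k" by (simp add: mult_le_cancel_right1)
        qed
        then show ?thesis using Gsum2 by simp
      qed
      have cq: "(\<Sum>k=1..d. w k * q k) = w 1 * q1 + c * S"
      proof -
        have "(\<Sum>k=2..d. w k * q k) = (\<Sum>k=2..d. c * (w k * \<Gamma> k))"
          by (rule sum.cong) (auto simp: qk)
        then have "(\<Sum>k=2..d. w k * q k) = c * S" by (simp add: S_def sum_distrib_left)
        then show ?thesis using split[of "\<lambda>k. w k * q k"] by (simp add: q_def)
      qed
      have w1: "0 \<le> w 1" "w 1 \<le> 1" using w01 in1 by auto
      have cur: "thermo_curve d \<Gamma> q \<sigma> x = w 1 * q1 + c * S" using wc cq by simp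
      have x1: "x \<le> 1" using x Gsum by simp
      have G1p: "0 < \<Gamma> 1" "0 < 1 - \<Gamma> 1" using Gpos[of 1] G1lt by auto
      have G1nz: "\<Gamma> 1 \<noteq> 0" "1 - \<Gamma> 1 \<noteq> 0" using G1p by auto
      show ?thesis
      proof (cases "\<Gamma> 1 \<le> q1")
        case qbig: True
        have c1: "c \<le> 1" using qbig G1p by (simp add: c_def field_simps)
        have qc: "0 \<le> q1 - c * \<Gamma> 1"
        proof -
          have "c * \<Gamma> 1 \<le> 1 * \<Gamma> 1" using c1 G1p by (intro mult_right_mono) auto
          then show ?thesis using qbig by simp
        qed
        have cq1: "c \<le> q1 / \<Gamma> 1" using qc G1p by (simp add: field_simps)
        show ?thesis
        proof (cases "x \<le> \<Gamma> 1")
          case True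
          define l where "l = x / \<Gamma> 1"
          have l: "0 \<le> l" "l \<le> 1" using True x G1p by (auto simp: l_def field_simps)
          have lb: "l * p 1 + (1 - l) * 0 \<le> thermo_curve d \<Gamma> p id (l * \<Gamma> 1 + (1 - l) * 0)"
            by (rule curve_comb[OF GposI ordp e1v zerov l e1s zeros e1s zeros])
          have lx: "l * \<Gamma> 1 = x" using G1p by (simp add: l_def)
          have h1: "l * q1 \<le> l * p 1" using q1le_p1 l by (intro mult_left_mono) auto
          have h2: "l * q1 = w 1 * q1 + S * (q1 / \<Gamma> 1)" using xS G1p by (simp add: l_def field_simps)
          have h3: "S * c \<le> S * (q1 / \<Gamma> 1)" using S0 cq1 by (intro mult_left_mono) auto
          show ?thesis using lb lx h1 h2 h3 cur by (simp add: mult.commute)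
        next
          case False
          define l where "l = (1 - x) / (1 - \<Gamma> 1)"
          have l: "0 \<le> l" "l \<le> 1" using False x1 G1p by (auto simp: l_def field_simps)
          have lb: "l * p 1 + (1 - l) * (\<Sum>k=1..d. p k) \<le> thermo_curve d \<Gamma> p id (l * \<Gamma> 1 + (1 - l) * (\<Sum>k=1..d. \<Gamma> k))"
            by (rule curve_comb[OF GposI ordp e1v onev l e1s ones e1s ones])
          have lx0: "l * (1 - \<Gamma> 1) = 1 - x" using G1p by (simp add: l_def)
          have lx: "l * \<Gamma> 1 + (1 - l) * 1 = x" using lx0 by (simp add: algebra_simps)
          have h1: "l * q1 \<le> l * p 1" using q1le_p1 l by (intro mult_left_mono) auto
          have e: "1 - l = (x - \<Gamma> 1) / (1 - \<Gamma> 1)" using G1nz by (simp add: l_def field_simps)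
          have e2: "(1 - l) * (1 - q1) = c * (x - \<Gamma> 1)" unfolding e c_def by simp
          have h2: "l * q1 + (1 - l) = q1 + c * (x - \<Gamma> 1)" using e2 by (simp add: algebra_simps)
          have h3: "w 1 * (q1 - c * \<Gamma> 1) \<le> 1 * (q1 - c * \<Gamma> 1)" using qc w1 by (intro mult_right_mono) auto
          have h4: "w 1 * q1 + c * S = c * x + w 1 * (q1 - c * \<Gamma> 1)" using xS by (simp add: algebra_simps)
          have h5: "c * (x - \<Gamma> 1) = c * x - c * \<Gamma> 1" by (simp add: algebra_simps)
          have "l * p 1 + (1 - l) \<le> thermo_curve d \<Gamma> p id x" using lb lx psum Gsum by simp
          moreover have "w 1 * (q1 - c * \<Gamma> 1) \<le> q1 - c * \<Gamma> 1" using h3 by simp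
          ultimately show ?thesis using h1 h2 h4 h5 cur by linarith
        qed
      next
        case qsmall: False
        have c1: "1 \<le> c" using qsmall G1p by (simp add: c_def field_simps)
        have qc: "q1 - c * \<Gamma> 1 \<le> 0"
        proof -
          have "1 * \<Gamma> 1 \<le> c * \<Gamma> 1" using c1 G1p by (intro mult_right_mono) auto
          then show ?thesis using qsmall by simp
        qed
        have h4: "w 1 * q1 + c * S = c * x + w 1 * (q1 - c * \<Gamma> 1)" using xS by (simp add: algebra_simps)
        show ?thesis
        proof (cases "x \<le> 1 - \<Gamma> 1")
          case True
          define l where "l = x / (1 - \<Gamma> 1)"
          have l: "0 \<le> l" "l \<le> 1" using True x G1p by (auto simp: l_def field_simps)
          have lb: "l * (1 - q1) + (1 - l) * 0 \<le> thermo_curve d \<Gamma> p id (l * (1 - \<Gamma> 1) + (1 - l) * 0)"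
            by (rule curve_comb[OF GposI ordp Wv zerov l Wp zeros WG zeros])
          have lx: "l * (1 - \<Gamma> 1) = x" using G1p by (simp add: l_def)
          have h1: "l * (1 - q1) = c * x" using G1p by (simp add: l_def c_def)
          have h3: "w 1 * (q1 - c * \<Gamma> 1) \<le> 0" using qc w1 by (simp add: mult_nonneg_nonpos)
          show ?thesis using lb lx h1 h3 h4 cur by simp
        next
          case False
          define l where "l = (1 - x) / \<Gamma> 1"
          have l: "0 \<le> l" "l \<le> 1" using False x1 G1p by (auto simp: l_def field_simps)
          have lb: "l * (1 - q1) + (1 - l) * (\<Sum>k=1..d. p k) \<le> thermo_curve d \<Gamma> p id (l * (1 - \<Gamma> 1) + (1 - l) * (\<Sum>k=1..d. \<Gamma> k))"
            by (rule curve_comb[OF GposI ordp Wv onev l Wp ones WG ones])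
          have lx0: "l * \<Gamma> 1 = 1 - x" using G1p by (simp add: l_def)
          have lx: "l * (1 - \<Gamma> 1) + (1 - l) * 1 = x" using lx0 by (simp add: algebra_simps)
          have wl: "1 - l \<le> w 1"
          proof -
            have "x - (1 - \<Gamma> 1) \<le> w 1 * \<Gamma> 1" using xS S1 by simp
            then show ?thesis using G1p by (simp add: l_def field_simps)
          qed
          have h3: "w 1 * (q1 - c * \<Gamma> 1) \<le> (1 - l) * (q1 - c * \<Gamma> 1)"
            using wl qc by (rule mult_right_mono_neg)
          have cG: "c * (1 - \<Gamma> 1) = 1 - q1" using G1nz by (simp add: c_def)
          have h2: "c * x + (1 - l) * (q1 - c * \<Gamma> 1) = l * (1 - q1) + (1 - l)"
          proof -
            have "c * x + (1 - l) * (q1 - c * \<Gamma> 1) = c * (x - \<Gamma> 1 + l * \<Gamma> 1) + (1 - l) * q1"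
              by (simp add: algebra_simps)
            also have "\<dots> = c * (1 - \<Gamma> 1) + (1 - l) * q1" using lx0 by simp
            also have "\<dots> = l * (1 - q1) + (1 - l)" using cG by (simp add: algebra_simps)
            finally show ?thesis .
          qed
          show ?thesis using lb lx h2 h3 h4 cur psum Gsum by simp
        qed
      qed
    qed
    show ?thesis unfolding thermomaj_def using ordp ordq main by blast
  qed
  have partB: "thermomaj d \<gamma> q r"
  proof -
    have ordr: "thermo_order d \<gamma> r id"
      unfolding thermo_order_def
      using chain_mono[of d "\<lambda>k. r k / \<gamma> k"] partC by (auto simp: permutes_id)
    obtain \<tau> where ordq: "thermo_order d \<gamma> q \<tau>" using exists_thermo_order by blast
    have g1p: "0 < \<gamma> 1" "0 < 1 - \<gamma> 1" using gpos[of 1] g1lt by auto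
    have g1nz: "\<gamma> 1 \<noteq> 0" "1 - \<gamma> 1 \<noteq> 0" using g1p by auto
    define t where "t = (1 - \<gamma> 1) / \<gamma> 1"
    have t: "0 \<le> t" "t \<le> 1" using g1p g1half by (auto simp: t_def field_simps)
    have tg: "t * \<gamma> 1 = 1 - \<gamma> 1" using g1nz by (simp add: t_def)
    have r1t: "r 1 = 1 - t * q1" by (simp add: r_def t_def)
    define V where "V = (\<lambda>k. 1 - (if k = 1 then t else 0) - (if k = d then 0 else 0))"
    have Vv: "\<forall>k\<in>{1..d}. 0 \<le> V k \<and> V k \<le> 1" using t by (auto simp: V_def)
    have Vs: "(\<Sum>k=1..d. V k * f k) = (\<Sum>k=1..d. f k) - t * f 1" for f :: "nat \<Rightarrow> real"
      unfolding V_def using sumW[OF in1 ind finite_atLeastAtMost, where c=t and e=0 and f=f] by simp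
    have Vq: "(\<Sum>k=1..d. V k * q k) = r 1" using Vs[of q] qsum r1t by (simp add: q_def)
    have Vg: "(\<Sum>k=1..d. V k * \<gamma> k) = \<gamma> 1" using Vs[of \<gamma>] gsum tg by simp
    have sig: "id permutes {1..d}" by (simp add: permutes_id)
    have main: "thermo_curve d \<gamma> r id x \<le> thermo_curve d \<gamma> q \<tau> x"
      if x: "0 \<le> x" "x \<le> (\<Sum>k=1..d. \<gamma> k)" for x
    proof -
      obtain w where w01: "\<forall>k\<in>{1..d}. 0 \<le> w k \<and> w k \<le> 1" and wx: "(\<Sum>k=1..d. w k * \<gamma> k) = x"
        and wc: "thermo_curve d \<gamma> r id x = (\<Sum>k=1..d. w k * r k)"
        using curve_attain[OF gposI sig x] by blast
      define S where "S = (\<Sum>k=2..d. w k * \<gamma> k)"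
      have xS: "x = w 1 * \<gamma> 1 + S" using wx split[of "\<lambda>k. w k * \<gamma> k"] by (simp add: S_def)
      have S0: "0 \<le> S" unfolding S_def using w01 gpos by (intro sum_nonneg) (auto simp: less_imp_le)
      have cr: "(\<Sum>k=1..d. w k * r k) = w 1 * r 1 + q1 / \<gamma> 1 * S"
      proof -
        have "(\<Sum>k=2..d. w k * r k) = (\<Sum>k=2..d. q1 / \<gamma> 1 * (w k * \<gamma> k))"
          by (rule sum.cong) (auto simp: r_def)
        then have "(\<Sum>k=2..d. w k * r k) = q1 / \<gamma> 1 * S" by (simp add: S_def sum_distrib_left)
        then show ?thesis using split[of "\<lambda>k. w k * r k"] by simp
      qed
      have w1: "0 \<le> w 1" "w 1 \<le> 1" using w01 in1 by auto
      have cur: "thermo_curve d \<gamma> r id x = w 1 * r 1 + q1 / \<gamma> 1 * S" using wc cr by simp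
      have x1: "x \<le> 1" using x gsum by simp
      show ?thesis
      proof (cases "x \<le> \<gamma> 1")
        case True
        define l where "l = x / \<gamma> 1"
        have l: "0 \<le> l" "l \<le> 1" using True x g1p by (auto simp: l_def field_simps)
        have lb: "l * r 1 + (1 - l) * 0 \<le> thermo_curve d \<gamma> q \<tau> (l * \<gamma> 1 + (1 - l) * 0)"
          by (rule curve_comb[OF gposI ordq Vv zerov l Vq zeros Vg zeros])
        have lx: "l * \<gamma> 1 = x" using g1nz by (simp add: l_def)
        have h2: "l * r 1 = w 1 * r 1 + S * (r 1 / \<gamma> 1)" using xS g1nz by (simp add: l_def field_simps)
        have h3: "S * (q1 / \<gamma> 1) \<le> S * (r 1 / \<gamma> 1)" using S0 r1g by (intro mult_left_mono) auto
        show ?thesis using lb lx h2 h3 cur by (simp add: mult.commute)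
      next
        case False
        define l where "l = (1 - x) / (1 - \<gamma> 1)"
        have l: "0 \<le> l" "l \<le> 1" using False x1 g1p by (auto simp: l_def field_simps)
        have lb: "l * r 1 + (1 - l) * (\<Sum>k=1..d. q k) \<le> thermo_curve d \<gamma> q \<tau> (l * \<gamma> 1 + (1 - l) * (\<Sum>k=1..d. \<gamma> k))"
          by (rule curve_comb[OF gposI ordq Vv onev l Vq ones Vg ones])
        have lx0: "l * (1 - \<gamma> 1) = 1 - x" using g1nz by (simp add: l_def)
        have lx: "l * \<gamma> 1 + (1 - l) * 1 = x" using lx0 by (simp add: algebra_simps)
        have lb2: "l * r 1 + (1 - l) \<le> thermo_curve d \<gamma> q \<tau> x" using lb lx qsum gsum by simp
        have lt: "l * t = (1 - x) / \<gamma> 1" using g1nz by (simp add: l_def t_def)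
        have ht: "t + 1 = 1 / \<gamma> 1" using g1nz by (simp add: t_def field_simps)
        have E1: "l * r 1 + (1 - l) = 1 - (l * t) * q1" unfolding r1t by (simp add: algebra_simps)
        have E1': "l * r 1 + (1 - l) = 1 - (1 - x) / \<gamma> 1 * q1" using E1 lt by simp
        have E2: "(1 - x) / \<gamma> 1 * q1 = q1 / \<gamma> 1 - q1 / \<gamma> 1 * x" by (simp add: diff_divide_distrib algebra_simps)
        have E3: "r 1 - q1 = 1 - (t + 1) * q1" unfolding r1t by (simp add: algebra_simps)
        have E4: "(t + 1) * q1 = q1 / \<gamma> 1" using ht by simp
        have E5: "q1 / \<gamma> 1 * (w 1 * \<gamma> 1) = w 1 * q1" using g1nz by simp
        have E6: "q1 / \<gamma> 1 * S = q1 / \<gamma> 1 * x - q1 / \<gamma> 1 * (w 1 * \<gamma> 1)" using xS by (simp add: algebra_simps)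
        have h3: "w 1 * (r 1 - q1) \<le> 1 * (r 1 - q1)" using w1 r1q1 by (intro mult_right_mono) auto
        have E7: "w 1 * (r 1 - q1) = w 1 * r 1 - w 1 * q1" by (simp add: algebra_simps)
        have h3': "w 1 * (r 1 - q1) \<le> r 1 - q1" using h3 by simp
        show ?thesis using lb2 cur E1' E2 E3 E4 E5 E6 h3' E7 by linarith
      qed
    qed
    show ?thesis unfolding thermomaj_def using ordr ordq main by blast
  qed
  have "thermomaj d \<Gamma> p q \<and> thermomaj d \<gamma> q r \<and> (\<forall>k\<in>{1..<d}. r k / \<gamma> k \<ge> r (k+1) / \<gamma> (k+1))"
    using partA partB partC by blast
  then show ?thesis unfolding Let_def \<gamma>_def \<Gamma>_def q_def r_def q1_def by simp
qed

end
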